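(* Let $k\ge 0$ be an integer and let $G$ be a graph with $m$ edges, where $m\ge\max\{(k^2+2k+2)^2+k+1,\,(2k+3)^2+k+1\}$. If $\rho(G)\ge\sqrt{m-k}$, then $G$ contains $K_{1,m-k}$ as a subgraph or $G$ contains $C_4$ as a subgraph.
   Context: All graphs are finite, simple and undirected. $\rho(G)$ denotes the spectral radius (largest eigenvalue) of the adjacency matrix $A(G)$ of $G$. $K_{1,t}$ denotes the star with $t$ edges (on $t+1$ vertices) and $C_4$ the cycle on $4$ vertices. "Contains as a subgraph" means not necessarily induced. *)

theory Defs
  imports "HOL-Analysis.Analysis"
begin

definition simple_graph :: "('a::finite \<Rightarrow> 'a \<Rightarrow> bool) \<Rightarrow> bool" where
  "simple_graph E \<longleftrightarrow> (\<forall>u v. E u v \<longrightarrow> E v u) \<and> (\<forall>v. \<not> E v v)"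

definition edges :: "('a \<Rightarrow> 'a \<Rightarrow> bool) \<Rightarrow> 'a set set" where
  "edges E = {{u, v} | u v. E u v}"

definition num_edges :: "('a \<Rightarrow> 'a \<Rightarrow> bool) \<Rightarrow> nat" where
  "num_edges E = card (edges E)"

definition adj_matrix :: "('a::finite \<Rightarrow> 'a \<Rightarrow> bool) \<Rightarrow> real^'a^'a" where
  "adj_matrix E = (\<chi> i j. if E i j then 1 else 0)"

definition is_eigenvalue :: "real^'n^'n \<Rightarrow> real \<Rightarrow> bool" where
  "is_eigenvalue A l \<longleftrightarrow> (\<exists>x. x \<noteq> 0 \<and> A *v x = l *\<^sub>R x)"

definition spectral_radius_graph :: "('a::finite \<Rightarrow> 'a \<Rightarrow> bool) \<Rightarrow> real" where
  "spectral_radius_graph E = Max {l. is_eigenvalue (adj_matrix E) l}"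

definition contains_star :: "('a \<Rightarrow> 'a \<Rightarrow> bool) \<Rightarrow> nat \<Rightarrow> bool" where
  "contains_star E t \<longleftrightarrow> (\<exists>c S. finite S \<and> card S = t \<and> c \<notin> S \<and> (\<forall>v\<in>S. E c v))"

definition contains_C4 :: "('a \<Rightarrow> 'a \<Rightarrow> bool) \<Rightarrow> bool" where
  "contains_C4 E \<longleftrightarrow> (\<exists>a b c d. distinct [a, b, c, d] \<and> E a b \<and> E b c \<and> E c d \<and> E d a)"

end

theory Submission
  imports Defs
begin

lemma sym_inner:
  fixes A :: "real^'n^'n"
  assumes sym: "\<And>i j. A$i$j = A$j$i"
  shows "inner x (A *v y) = inner (A *v x) y"
proof -
  have "x v* A = A *v x"
    by (simp add: vector_matrix_mult_def matrix_vector_mult_def vec_eq_iff sym mult.commute)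
  then show ?thesis using dot_lmul_matrix[of x A y] by simp
qed

lemma sym_eigen_exists:
  fixes A :: "real^'n^'n"
  assumes sym: "\<And>i j. A$i$j = A$j$i"
  shows "\<exists>l. is_eigenvalue A l"
proof -
  define q where "q = (\<lambda>x::real^'n. inner x (A *v x))"
  have cont: "continuous_on (sphere 0 1) q"
    unfolding q_def
    by (intro continuous_intros linear_continuous_on matrix_vector_mul_linear bounded_linear_intros)
  have ne: "sphere (0::real^'n) 1 \<noteq> {}" by simp
  obtain x0 where x0: "x0 \<in> sphere 0 1" and mx: "\<And>z. z \<in> sphere 0 1 \<Longrightarrow> q z \<le> q x0"
    using continuous_attains_sup[OF compact_sphere ne cont] by blast
  define mu where "mu = q x0"
  have qscale: "q (c *\<^sub>R z) = c^2 * q z" for c z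
    by (simp add: q_def matrix_vector_mult_scaleR power2_eq_square)
  have bound: "q z \<le> mu * inner z z" for z
  proof (cases "z = 0")
    case True then show ?thesis by (simp add: q_def)
  next
    case False
    then have nz: "norm z > 0" by simp
    have "(inverse (norm z)) *\<^sub>R z \<in> sphere 0 1" using nz by simp
    then have "q ((inverse (norm z)) *\<^sub>R z) \<le> mu" using mx mu_def by blast
    then have "(inverse (norm z))^2 * q z \<le> mu" by (simp add: qscale)
    then have "q z \<le> mu * (norm z)^2" using nz by (simp add: field_simps power2_eq_square)
    then show ?thesis by (simp add: power2_norm_eq_inner)
  qed
  define b where "b = mu *\<^sub>R x0 - A *v x0"
  have x0n: "inner x0 x0 = 1" using x0 by (simp add: power2_norm_eq_inner[symmetric])
  define c where "c = mu * inner b b - q b"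
  have c0: "c \<ge> 0" using bound[of b] c_def by simp
  have key: "0 \<le> 2 * t * inner b b + t^2 * c" for t
  proof -
    have h1: "q (x0 + t *\<^sub>R b) \<le> mu * inner (x0 + t *\<^sub>R b) (x0 + t *\<^sub>R b)" by (rule bound)
    have h2: "q (x0 + t *\<^sub>R b) = mu + 2 * t * inner b (A *v x0) + t^2 * q b"
    proof -
      have "inner x0 (A *v b) = inner (A *v x0) b" by (rule sym_inner[OF sym])
      then show ?thesis
        by (simp add: q_def mu_def algebra_simps inner_commute power2_eq_square)
    qed
    have h3: "inner (x0 + t *\<^sub>R b) (x0 + t *\<^sub>R b) = 1 + 2 * t * inner b x0 + t^2 * inner b b"
      using x0n by (simp add: algebra_simps inner_commute power2_eq_square)
    have h4: "inner b b = mu * inner b x0 - inner b (A *v x0)"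
      using x0n by (simp add: b_def inner_diff_right inner_diff_left inner_commute mu_def q_def)
    have h5: "mu * (1 + 2 * t * inner b x0 + t^2 * inner b b) = mu + 2 * t * (mu * inner b x0) + t^2 * (mu * inner b b)"
      by (simp add: algebra_simps)
    have h6: "2 * t * inner b b + t^2 * c = 2 * t * (mu * inner b x0) - 2 * t * inner b (A *v x0) + (t^2 * (mu * inner b b) - t^2 * q b)"
    proof -
      have "2 * t * inner b b = 2 * t * (mu * inner b x0) - 2 * t * inner b (A *v x0)"
        by (simp add: h4 right_diff_distrib)
      moreover have "t^2 * c = t^2 * (mu * inner b b) - t^2 * q b" by (simp add: c_def right_diff_distrib)
      ultimately show ?thesis by linarith
    qed
    have h1': "q (x0 + t *\<^sub>R b) \<le> mu * (1 + 2 * t * inner b x0 + t^2 * inner b b)"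
      using h1 h3 by simp
    show ?thesis using h1' h2 h5 h6 by linarith
  qed
  have "inner b b = 0"
  proof (rule ccontr)
    assume h: "inner b b \<noteq> 0"
    define a where "a = inner b b"
    have a0: "a > 0" using h a_def by (simp add: order_le_neq_trans)
    define t where "t = - a / (c + 1)"
    have c1: "c + 1 > 0" using c0 by linarith
    have tn: "t < 0" using a0 c1 by (simp add: t_def divide_neg_pos)
    have "c / (c + 1) \<le> 1" using c1 by simp
    then have "a * (c / (c+1)) \<le> a * 1" using a0 by (intro mult_left_mono) auto
    then have tc: "t * c \<ge> - a" by (simp add: t_def)
    have "t * (2 * a + t * c) < 0" using tn tc a0 by (intro mult_neg_pos) auto
    moreover have "0 \<le> 2 * t * a + t^2 * c" using key[of t] a_def by simp
    moreover have "2 * t * a + t^2 * c = t * (2 * a + t * c)" by (simp add: algebra_simps power2_eq_square)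
    ultimately show False by linarith
  qed
  then have "b = 0" by simp
  then have "A *v x0 = mu *\<^sub>R x0" by (simp add: b_def)
  moreover have "x0 \<noteq> 0" using x0 by auto
  ultimately show ?thesis unfolding is_eigenvalue_def by blast
qed

lemma sym_eigen_finite:
  fixes A :: "real^'n^'n"
  assumes sym: "\<And>i j. A$i$j = A$j$i"
  shows "finite {l. is_eigenvalue A l}"
proof -
  define S where "S = {l. is_eigenvalue A l}"
  define v where "v = (\<lambda>l. SOME x. x \<noteq> 0 \<and> A *v x = l *\<^sub>R x)"
  have vp: "v l \<noteq> 0 \<and> A *v v l = l *\<^sub>R v l" if "l \<in> S" for l
    using that someI_ex[of "\<lambda>x. x \<noteq> 0 \<and> A *v x = l *\<^sub>R x"] unfolding S_def is_eigenvalue_def v_def by blast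
  have inj: "inj_on v S"
  proof (rule inj_onI)
    fix l l' assume "l \<in> S" "l' \<in> S" "v l = v l'"
    then have "l *\<^sub>R v l = l' *\<^sub>R v l" "v l \<noteq> 0" using vp by metis+
    then show "l = l'" by simp
  qed
  have orth: "pairwise orthogonal (v ` S)"
  proof (auto simp: pairwise_def)
    fix l l' assume l: "l \<in> S" and l': "l' \<in> S" and ne: "v l \<noteq> v l'"
    then have "l \<noteq> l'" by auto
    have "inner (v l) (A *v v l') = inner (A *v v l) (v l')" by (rule sym_inner[OF sym])
    then have "l' * inner (v l) (v l') = l * inner (v l) (v l')"
      using vp[OF l] vp[OF l'] by simp
    then show "orthogonal (v l) (v l')" using \<open>l \<noteq> l'\<close> by (simp add: orthogonal_def)
  qed
  have "0 \<notin> v ` S" using vp by auto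
  then have "independent (v ` S)" using pairwise_orthogonal_independent orth by blast
  then have "finite (v ` S)" by (rule independent_imp_finite)
  then show ?thesis using inj finite_imageD S_def by blast
qed

lemma final_alg:
  fixes L M P Q n1 s d m k :: real
  assumes M: "M > 0" and F1: "L^2 * M \<le> d * M + P + Q"
    and F2: "L * P \<le> n1 * M + P + Q" and F3: "L * Q \<le> M * s"
    and F4: "n1 + s \<le> 2 * (m - d)" and Lk: "L > 2 * k + 3" and k0: "k \<ge> 0"
    and dm: "d + k + 1 \<le> m" and Lm: "L^2 \<ge> m - k"
  shows False
proof -
  have "(L - 1) * (P + Q) \<le> n1 * M + L * Q" using F2 by (simp add: algebra_simps)
  also have "\<dots> \<le> n1 * M + M * s" using F3 by simp
  also have "\<dots> = (n1 + s) * M" by (simp add: algebra_simps)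
  also have "\<dots> \<le> 2 * (m - d) * M" using F4 M by (intro mult_right_mono) auto
  finally have A: "(L - 1) * (P + Q) \<le> 2 * (m - d) * M" .
  have B: "(L^2 - d) * M \<le> P + Q" using F1 by (simp add: algebra_simps)
  have L1: "L - 1 \<ge> 0" using Lk k0 by linarith
  have "(L - 1) * ((L^2 - d) * M) \<le> (L - 1) * (P + Q)" using B L1 by (rule mult_left_mono)
  with A have "((L - 1) * (L^2 - d)) * M \<le> (2 * (m - d)) * M" by (simp add: algebra_simps)
  then have C: "(L - 1) * (L^2 - d) \<le> 2 * (m - d)" using M by simp
  have "(L - 1) * ((m - d) - k) \<le> (L - 1) * (L^2 - d)" using L1 Lm by (intro mult_left_mono) auto
  with C have D: "(L - 1) * ((m - d) - k) \<le> 2 * (m - d)" by linarith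
  have E: "(L - 3) * (k + 1) \<le> (L - 3) * (m - d)" using Lk k0 dm by (intro mult_left_mono) auto
  have "(L - 3) * (m - d) \<le> (L - 1) * k" using D by (simp add: algebra_simps)
  with E have "(L - 3) * (k + 1) \<le> (L - 1) * k" by linarith
  then have "L \<le> 2 * k + 3" by (simp add: algebra_simps)
  with Lk show False by linarith
qed

lemma c4_common:
  fixes E :: "'a::finite \<Rightarrow> 'a \<Rightarrow> bool"
  assumes sg: "simple_graph E" and nc: "\<not> contains_C4 E" and wu: "w \<noteq> u"
  shows "card {v. E u v \<and> E w v} \<le> 1"
proof -
  have "\<forall>a1\<in>{v. E u v \<and> E w v}. \<forall>a2\<in>{v. E u v \<and> E w v}. a1 = a2"
  proof (intro ballI, rule ccontr)
    fix a1 a2 assume a1: "a1 \<in> {v. E u v \<and> E w v}" and a2: "a2 \<in> {v. E u v \<and> E w v}" and ne: "a1 \<noteq> a2"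
    have irr: "\<And>v. \<not> E v v" and sy: "\<And>x y. E x y \<Longrightarrow> E y x" using sg by (auto simp: simple_graph_def)
    have "distinct [u, a1, w, a2]" using a1 a2 ne wu irr by auto
    moreover have "E u a1 \<and> E a1 w \<and> E w a2 \<and> E a2 u" using a1 a2 sy by auto
    ultimately have "contains_C4 E" unfolding contains_C4_def by blast
    with nc show False by simp
  qed
  then show ?thesis by (simp add: card_le_Suc0_iff_eq)
qed

lemma gen_sum:
  fixes E :: "'a::finite \<Rightarrow> 'a \<Rightarrow> bool" and y :: "'a \<Rightarrow> real"
  assumes sg: "simple_graph E" and nc: "\<not> contains_C4 E"
    and ynn: "\<And>v. y v \<ge> 0" and ymax: "\<And>v. y v \<le> y u"
    and T: "T \<subseteq> {w. E u w}"
    and W: "W = {w. w \<noteq> u \<and> (\<exists>v. E u v \<and> E w v)}"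
  shows "(\<Sum>w\<in>T. \<Sum>z\<in>{z. E w z}. y z) \<le> real (card T) * y u + (\<Sum>z\<in>W. y z)"
proof -
  have sy: "\<And>x y. E x y \<Longrightarrow> E y x" using sg by (auto simp: simple_graph_def)
  have "(\<Sum>w\<in>T. \<Sum>z\<in>{z. E w z}. y z) = (\<Sum>w\<in>T. \<Sum>z\<in>UNIV. if E w z then y z else 0)"
    by (simp add: sum.If_cases Int_def)
  also have "\<dots> = (\<Sum>z\<in>UNIV. \<Sum>w\<in>T. if E w z then y z else 0)" by (rule sum.swap)
  also have "\<dots> = (\<Sum>z\<in>UNIV. real (card {w\<in>T. E w z}) * y z)"
    by (simp add: sum.inter_filter[symmetric])
  also have "\<dots> \<le> (\<Sum>z\<in>UNIV. (if z = u then real (card T) * y u else 0) + (if z \<in> W then y z else 0))"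
  proof (rule sum_mono)
    fix z :: 'a
    show "real (card {w\<in>T. E w z}) * y z \<le> (if z = u then real (card T) * y u else 0) + (if z \<in> W then y z else 0)"
    proof (cases "z = u")
      case True
      have "card {w\<in>T. E w z} \<le> card T" by (rule card_mono) auto
      then have "real (card {w\<in>T. E w z}) * y z \<le> real (card T) * y z"
        using ynn by (intro mult_right_mono) auto
      moreover have "u \<notin> W" using W by simp
      ultimately show ?thesis using True by simp
    next
      case False
      show ?thesis
      proof (cases "z \<in> W")
        case True
        have "{w\<in>T. E w z} \<subseteq> {v. E u v \<and> E z v}" using T sy by auto
        then have "card {w\<in>T. E w z} \<le> card {v. E u v \<and> E z v}" by (rule card_mono[rotated]) auto
        also have "\<dots> \<le> 1" using c4_common[OF sg nc False] .
        finally have "real (card {w\<in>T. E w z}) * y z \<le> 1 * y z"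
          using ynn by (intro mult_right_mono) auto
        then show ?thesis using True False by simp
      next
        case zW: False
        have "{w\<in>T. E w z} = {}" using T sy zW False W by auto
        then show ?thesis using False zW by (simp only: card.empty) simp
      qed
    qed
  qed
  also have "\<dots> = real (card T) * y u + (\<Sum>z\<in>W. y z)"
  proof -
    have "(\<Sum>z\<in>UNIV. if z \<in> W then y z else 0) = sum y (UNIV \<inter> W)"
      by (rule sum.inter_restrict[symmetric]) simp
    then show ?thesis by (simp add: sum.distrib)
  qed
  finally show ?thesis .
qed

lemma card2: "card {x, y} \<le> 2"
  by (cases "x = y") (simp_all add: card_insert_if)

lemma edge_split:
  fixes E :: "'a::finite \<Rightarrow> 'a \<Rightarrow> bool" and u :: 'a
  assumes sg: "simple_graph E"
  defines "Eo \<equiv> {e \<in> edges E. u \<notin> e}"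
  shows "num_edges E = card {w. E u w} + card Eo"
    and "card {(v,w). E v w \<and> v \<noteq> u \<and> w \<noteq> u} \<le> 2 * card Eo"
proof -
  have sy: "\<And>x y. E x y \<Longrightarrow> E y x" using sg by (auto simp: simple_graph_def)
  define Eu where "Eu = {e \<in> edges E. u \<in> e}"
  have "Eu = (\<lambda>w. {u, w}) ` {w. E u w}"
  proof
    show "Eu \<subseteq> (\<lambda>w. {u, w}) ` {w. E u w}"
    proof
      fix e assume "e \<in> Eu"
      then obtain a b where e: "e = {a, b}" "E a b" "u \<in> e" unfolding Eu_def edges_def by blast
      show "e \<in> (\<lambda>w. {u, w}) ` {w. E u w}"
      proof (cases "u = a")
        case True
        then have "e = {u, b}" "E u b" using e by simp_all
        then show ?thesis by blast
      next
        case False then have ub: "u = b" using e by blast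
        then have "e = {u, a}" using e by (simp add: insert_commute)
        moreover have "E u a" using ub e sy by simp
        ultimately show ?thesis by blast
      qed
    qed
    show "(\<lambda>w. {u, w}) ` {w. E u w} \<subseteq> Eu"
    proof (rule subsetI)
      fix e assume "e \<in> (\<lambda>w. {u, w}) ` {w. E u w}"
      then obtain w where w: "e = {u, w}" "E u w" by blast
      then have "e \<in> edges E" unfolding edges_def by blast
      then show "e \<in> Eu" unfolding Eu_def using w by simp
    qed
  qed
  moreover have "inj_on (\<lambda>w. {u, w}) {w. E u w}"
  proof (rule inj_onI)
    fix w w' assume "{u, w} = {u, w'}"
    then show "w = w'" by (metis doubleton_eq_iff)
  qed
  ultimately have cu: "card Eu = card {w. E u w}" by (simp add: card_image)
  have "edges E = Eu \<union> Eo" "Eu \<inter> Eo = {}" unfolding Eu_def Eo_def by blast+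
  then have "card (edges E) = card Eu + card Eo" by (simp add: card_Un_disjoint[OF finite finite])
  then show "num_edges E = card {w. E u w} + card Eo" using cu by (simp add: num_edges_def)
  define F where "F = (\<lambda>e. {(a,b). E a b \<and> {a,b} = e})"
  have "{(v,w). E v w \<and> v \<noteq> u \<and> w \<noteq> u} \<subseteq> (\<Union>e\<in>Eo. F e)"
  proof (rule subsetI)
    fix p assume p: "p \<in> {(v,w). E v w \<and> v \<noteq> u \<and> w \<noteq> u}"
    obtain v w where pv: "p = (v, w)" by (cases p)
    have vw: "E v w" "v \<noteq> u" "w \<noteq> u" using p pv by auto
    have "{v,w} \<in> edges E" unfolding edges_def using vw by blast
    then have "{v,w} \<in> Eo" unfolding Eo_def using vw by simp
    moreover have "p \<in> F {v,w}" unfolding F_def pv using vw by simp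
    ultimately show "p \<in> (\<Union>e\<in>Eo. F e)" by blast
  qed
  then have "card {(v,w). E v w \<and> v \<noteq> u \<and> w \<noteq> u} \<le> card (\<Union>e\<in>Eo. F e)"
    by (rule card_mono[OF finite])
  also have "\<dots> \<le> (\<Sum>e\<in>Eo. card (F e))" by (rule card_UN_le[OF finite])
  also have "\<dots> \<le> (\<Sum>e\<in>Eo. 2)"
  proof (rule sum_mono)
    fix e assume "e \<in> Eo"
    then obtain a b where e: "e = {a, b}" unfolding Eo_def edges_def by blast
    have "F e \<subseteq> {(a,b), (b,a)}"
    proof (rule subsetI)
      fix p assume pF: "p \<in> F e"
      obtain x z where p: "p = (x, z)" by (cases p)
      have "{x, z} = {a, b}" using pF unfolding F_def p e by simp
      then have "(x = a \<and> z = b) \<or> (x = b \<and> z = a)" by (simp only: doubleton_eq_iff)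
      then show "p \<in> {(a,b), (b,a)}" using p by blast
    qed
    then have "card (F e) \<le> card {(a,b), (b,a)}" by (rule card_mono[OF finite])
    also have "\<dots> \<le> 2" by (rule card2)
    finally show "card (F e) \<le> 2" .
  qed
  also have "\<dots> = 2 * card Eo" by simp
  finally show "card {(v,w). E v w \<and> v \<noteq> u \<and> w \<noteq> u} \<le> 2 * card Eo" .
qed

lemma darts_bound:
  fixes E :: "'a::finite \<Rightarrow> 'a \<Rightarrow> bool"
  assumes sg: "simple_graph E"
    and W: "W = {w. w \<noteq> u \<and> (\<exists>v. E u v \<and> E w v)}"
  shows "card (W \<inter> {w. E u w}) + (\<Sum>w\<in>W - {w. E u w}. card {z. E w z})
          \<le> card {(v,w). E v w \<and> v \<noteq> u \<and> w \<noteq> u}"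
proof -
  have sy: "\<And>x y. E x y \<Longrightarrow> E y x" and irr: "\<And>v. \<not> E v v" using sg by (auto simp: simple_graph_def)
  define N1 where "N1 = W \<inter> {w. E u w}"
  define R1 where "R1 = W - {w. E u w}"
  define X1 where "X1 = {(w,z). w \<in> N1 \<and> E w z \<and> E u z}"
  define X2 where "X2 = Sigma R1 (\<lambda>w. {z. E w z})"
  define D where "D = {(v,w). E v w \<and> v \<noteq> u \<and> w \<noteq> u}"
  have "N1 \<subseteq> fst ` X1"
  proof
    fix w assume "w \<in> N1"
    then obtain v where "E u v" "E w v" using N1_def W by blast
    then have "(w, v) \<in> X1" using \<open>w \<in> N1\<close> X1_def by simp
    then show "w \<in> fst ` X1" by force
  qed
  then have "card N1 \<le> card (fst ` X1)" by (rule card_mono[OF finite])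
  also have "\<dots> \<le> card X1" by (rule card_image_le[OF finite])
  finally have c1: "card N1 \<le> card X1" .
  have c2: "card X2 = (\<Sum>w\<in>R1. card {z. E w z})" unfolding X2_def by (intro card_SigmaI ballI finite)
  have "X1 \<inter> X2 = {}" unfolding X1_def X2_def N1_def R1_def by auto
  then have "card (X1 \<union> X2) = card X1 + card X2" by (rule card_Un_disjoint[OF finite finite])
  moreover have "X1 \<union> X2 \<subseteq> D"
  proof (rule subsetI)
    fix p assume p: "p \<in> X1 \<union> X2"
    obtain w z where pw: "p = (w, z)" by (cases p)
    show "p \<in> D"
    proof (cases "p \<in> X1")
      case True
      then have "w \<in> W" "E w z" "E u z" using pw unfolding X1_def N1_def by auto
      then have "w \<noteq> u" "z \<noteq> u" using W irr by auto
      then show ?thesis using \<open>E w z\<close> pw D_def by simp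
    next
      case False
      then have "p \<in> X2" using p by simp
      then have "w \<in> W" "\<not> E u w" "E w z" using pw unfolding X2_def R1_def by auto
      then have "w \<noteq> u" "z \<noteq> u" using W sy by auto
      then show ?thesis using \<open>E w z\<close> pw D_def by simp
    qed
  qed
  then have "card (X1 \<union> X2) \<le> card D" by (rule card_mono[OF finite])
  ultimately show ?thesis using c1 c2 unfolding N1_def R1_def D_def by linarith
qed

theorem theorem1p4:
  fixes E :: "'a::finite \<Rightarrow> 'a \<Rightarrow> bool" and k m :: nat
  assumes "simple_graph E"
    and "m = num_edges E"
    and "m \<ge> max ((k^2 + 2*k + 2)^2 + k + 1) ((2*k + 3)^2 + k + 1)"
    and "spectral_radius_graph E \<ge> sqrt (real m - real k)"
  shows "contains_star E (m - k) \<or> contains_C4 E"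
proof (rule ccontr)
  assume nconc: "\<not> (contains_star E (m - k) \<or> contains_C4 E)"
  then have nstar: "\<not> contains_star E (m - k)" and nc: "\<not> contains_C4 E" by auto
  have sg: "simple_graph E" using assms(1) .
  have sy: "\<And>x y. E x y \<Longrightarrow> E y x" and irr: "\<And>v. \<not> E v v" using sg by (auto simp: simple_graph_def)
  define A where "A = adj_matrix E"
  have symA: "\<And>i j. A$i$j = A$j$i" unfolding A_def adj_matrix_def using sy by auto
  define S where "S = {l. is_eigenvalue A l}"
  have finS: "finite S" unfolding S_def by (rule sym_eigen_finite[OF symA])
  have neS: "S \<noteq> {}" unfolding S_def using sym_eigen_exists[OF symA] by blast
  define L where "L = spectral_radius_graph E"
  have LS: "L \<in> S" unfolding L_def spectral_radius_graph_def S_def[symmetric] A_def[symmetric]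
    using finS neS by (rule Max_in)
  then obtain x where xnz: "x \<noteq> 0" and ev: "A *v x = L *\<^sub>R x" unfolding S_def is_eigenvalue_def by blast
  have mbig: "m \<ge> (2*k + 3)^2 + k + 1" using assms(3) by simp
  have mk: "real m - real k \<ge> (2 * real k + 3)^2 + 1"
  proof -
    have "real m \<ge> real ((2*k + 3)^2 + k + 1)" using mbig by (simp only: of_nat_le_iff)
    then show ?thesis by simp
  qed
  have Lsq: "L \<ge> sqrt (real m - real k)" using assms(4) L_def by simp
  have "sqrt (real m - real k) > sqrt ((2 * real k + 3)^2)" using mk by (intro real_sqrt_less_mono) simp
  then have Lk: "L > 2 * real k + 3" using Lsq by (simp add: abs_of_nonneg)
  have L0: "L \<ge> 0" using Lk by simp
  have mk0: "real m - real k \<ge> 0" using mk by (smt (verit) zero_le_power2)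
  have "(sqrt (real m - real k))^2 \<le> L^2" using power_mono[OF Lsq real_sqrt_ge_zero[OF mk0]] .
  then have Lm: "L^2 \<ge> real m - real k" using mk0 by simp
  define y where "y = (\<lambda>v. \<bar>x $ v\<bar>)"
  have ynn: "\<And>v. y v \<ge> 0" unfolding y_def by simp
  have evy: "L * y v \<le> (\<Sum>w\<in>{w. E v w}. y w)" for v
  proof -
    have Avj: "\<And>j. A $ v $ j = (if E v j then 1 else 0)" by (simp add: A_def adj_matrix_def)
    have "(A *v x) $ v = (\<Sum>j\<in>UNIV. A $ v $ j * x $ j)" by (simp add: matrix_vector_mult_def)
    also have "\<dots> = (\<Sum>j\<in>UNIV. if E v j then x $ j else 0)" by (rule sum.cong) (simp_all add: Avj)
    also have "\<dots> = (\<Sum>j\<in>{w\<in>UNIV. E v w}. x $ j)" by (rule sum.inter_filter[OF finite, symmetric])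
    also have "\<dots> = (\<Sum>j\<in>{w. E v w}. x $ j)" by simp
    finally have e1: "(A *v x) $ v = (\<Sum>j\<in>{w. E v w}. x $ j)" .
    have "(A *v x) $ v = L * x $ v" by (simp add: ev)
    with e1 have "L * x $ v = (\<Sum>j\<in>{w. E v w}. x $ j)" by simp
    then have "\<bar>L * x $ v\<bar> \<le> (\<Sum>j\<in>{w. E v w}. \<bar>x $ j\<bar>)" by (metis sum_abs)
    then show ?thesis using L0 by (simp add: y_def abs_mult)
  qed
  obtain u0 where "x $ u0 \<noteq> 0" using xnz by (metis vec_eq_iff zero_index)
  then have yu0: "y u0 > 0" unfolding y_def by simp
  have "\<exists>u. \<forall>v. y v \<le> y u"
  proof -
    have "Max (range y) \<in> range y" by (rule Max_in) auto
    then obtain u where "y u = Max (range y)" by (metis imageE)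
    moreover have "\<forall>v. y v \<le> Max (range y)" by simp
    ultimately show ?thesis by metis
  qed
  then obtain u where ymax: "\<And>v. y v \<le> y u" by blast
  define M where "M = y u"
  have M0: "M > 0" using ymax[of u0] yu0 M_def by simp
  define N where "N = {w. E u w}"
  define d where "d = card N"
  have dlt: "d < m - k"
  proof (rule ccontr)
    assume "\<not> d < m - k"
    then have "m - k \<le> card N" using d_def by simp
    then obtain T where T: "T \<subseteq> N" "card T = m - k" "finite T" by (rule obtain_subset_with_card_n)
    have "u \<notin> T" using T irr N_def by auto
    moreover have "\<forall>v\<in>T. E u v" using T N_def by auto
    ultimately have "contains_star E (m - k)" unfolding contains_star_def using T by blast
    with nstar show False by simp
  qed
  define W where "W = {w. w \<noteq> u \<and> (\<exists>v. E u v \<and> E w v)}"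
  define N1 where "N1 = W \<inter> N"
  define R1 where "R1 = W - N"
  define P where "P = (\<Sum>w\<in>N1. y w)"
  define Q where "Q = (\<Sum>w\<in>R1. y w)"
  have WPQ: "(\<Sum>w\<in>W. y w) = P + Q" unfolding P_def Q_def N1_def R1_def
    by (rule sum.Int_Diff[OF finite])
  have F1: "L^2 * M \<le> real d * M + P + Q"
  proof -
    have "L * M \<le> (\<Sum>w\<in>N. y w)" using evy[of u] M_def N_def by simp
    then have "L * (L * M) \<le> L * (\<Sum>w\<in>N. y w)" using L0 by (rule mult_left_mono)
    also have "\<dots> = (\<Sum>v\<in>N. L * y v)" by (simp add: sum_distrib_left)
    also have "\<dots> \<le> (\<Sum>v\<in>N. \<Sum>z\<in>{z. E v z}. y z)" by (rule sum_mono) (rule evy)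
    also have "\<dots> \<le> real (card N) * y u + (\<Sum>z\<in>W. y z)"
      by (rule gen_sum[where y=y and u=u, OF sg nc ynn ymax]) (simp_all add: N_def W_def)
    finally show ?thesis using WPQ d_def M_def by (simp add: power2_eq_square)
  qed
  have F2: "L * P \<le> real (card N1) * M + P + Q"
  proof -
    have "L * P = (\<Sum>v\<in>N1. L * y v)" by (simp add: P_def sum_distrib_left)
    also have "\<dots> \<le> (\<Sum>v\<in>N1. \<Sum>z\<in>{z. E v z}. y z)" by (rule sum_mono) (rule evy)
    also have "\<dots> \<le> real (card N1) * y u + (\<Sum>z\<in>W. y z)"
      by (rule gen_sum[where y=y and u=u, OF sg nc ynn ymax]) (auto simp add: N_def W_def N1_def)
    finally show ?thesis using WPQ M_def by simp
  qed
  define s where "s = (\<Sum>w\<in>R1. card {z. E w z})"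
  have F3: "L * Q \<le> M * real s"
  proof -
    have "L * Q = (\<Sum>v\<in>R1. L * y v)" by (simp add: Q_def sum_distrib_left)
    also have "\<dots> \<le> (\<Sum>v\<in>R1. \<Sum>z\<in>{z. E v z}. y z)" by (rule sum_mono) (rule evy)
    also have "\<dots> \<le> (\<Sum>v\<in>R1. \<Sum>z\<in>{z. E v z}. M)"
      by (intro sum_mono) (simp add: M_def ymax)
    also have "\<dots> = M * real s" by (simp add: s_def of_nat_sum sum_distrib_left mult.commute)
    finally show ?thesis .
  qed
  define Eo where "Eo = {e \<in> edges E. u \<notin> e}"
  have es1: "m = d + card Eo" using edge_split(1)[OF sg, of u] assms(2) d_def N_def Eo_def by simp
  have es2: "card {(v,w). E v w \<and> v \<noteq> u \<and> w \<noteq> u} \<le> 2 * card Eo"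
    using edge_split(2)[OF sg, of u] Eo_def by simp
  have db: "card N1 + s \<le> card {(v,w). E v w \<and> v \<noteq> u \<and> w \<noteq> u}"
    using darts_bound[OF sg W_def] unfolding N1_def R1_def s_def N_def .
  have F4n: "card N1 + s \<le> 2 * (m - d)" using db es2 es1 by linarith
  have F4: "real (card N1) + real s \<le> 2 * (real m - real d)"
  proof -
    have "real (card N1 + s) \<le> real (2 * (m - d))" using F4n by (simp only: of_nat_le_iff)
    then show ?thesis using es1 by simp
  qed
  have dm: "real d + real k + 1 \<le> real m"
  proof -
    have "d + k + 1 \<le> m" using dlt by linarith
    then have "real (d + k + 1) \<le> real m" by (simp only: of_nat_le_iff)
    then show ?thesis by simp
  qed
  show False
    by (rule final_alg[OF M0 F1 F2 F3 F4 Lk _ dm Lm]) simp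
qed

end
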